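(* Fix a bounding strategy: degree bound $\phi$, explicit bound $k$, or node-weighted with cost $c$. Let $T$ be a non-degenerate FQST that is feasible for this strategy and that contains a pair of overlapping edges with common node $v$. Assume that either the strategy is the explicit bound or the node-weighted one, or the strategy is the degree bound and $v$ is not a Steiner point of degree exactly $\phi$. Then $T$ is not an MFQST for that strategy.
   Context: Let $Z=\{z_1,\dots,z_n\}\subset\mathbb{R}^2$ ($n\ge 1$) be a set of sources and $z_{BS}\in\mathbb{R}^2\setminus Z$ a sink; each source has supply $1$. A flow-dependent quadratic Steiner tree (FQST) consists of a finite set $S\subset\mathbb{R}^2$ of Steiner points and a tree $T$ with vertex set $Z\cup S\cup\{z_{BS}\}$ whose edges are directed towards $z_{BS}$. Every node other than the sink has exactly one out-edge, and the sink has none. Each edge $e$ carries a positive flow $f(e)$ such that: - at each source, the flow on its out-edge minus the total flow on its in-edges equals $1$; - at each Steiner point, the out-flow equals the total in-flow; - the sink receives total flow $n$. The cost is $L(T)=\sum_{e\in E(T)} f(e)|e|^2$. $T$ is degenerate if some edge has length $0$. Two edges are overlapping if they share a common endpoint and one of them, as a segment, is contained in the other. Bounding strategies and MFQSTs: - Degree bound: for a fixed integer $\phi\ge3$, every Steiner point has degree $\ge\phi$; an MFQST minimises $L$ among such FQSTs. - Explicit bound: for a fixed $k$, $|S|\le k$; an MFQST minimises $L$ among such FQSTs. - Node-weighted: for a fixed $c>0$, an MFQST minimises $L_c(T)=L(T)+c|S|$ over all FQSTs. *)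

theory Defs
  imports "HOL-Analysis.Analysis"
begin

text \<open>Every non-sink vertex v has exactly one out-edge, namely (v, succ v), carrying
the flow  flow v.\<close>

record fqst =
  V     :: "nat set"
  Zv    :: "nat set"
  Sv    :: "nat set"
  sink  :: nat
  pos   :: "nat \<Rightarrow> real^2"
  succ  :: "nat \<Rightarrow> nat"
  flow  :: "nat \<Rightarrow> real"

definition in_nbrs :: "fqst \<Rightarrow> nat \<Rightarrow> nat set" where
  "in_nbrs T v = {u \<in> V T - {sink T}. succ T u = v}"

definition is_fqst :: "(real^2) set \<Rightarrow> real^2 \<Rightarrow> fqst \<Rightarrow> bool" where
  "is_fqst Z zBS T \<longleftrightarrow>
     finite (V T) \<and>
     V T = Zv T \<union> Sv T \<union> {sink T} \<and>
     Zv T \<inter> Sv T = {} \<and> sink T \<notin> Zv T \<and> sink T \<notin> Sv T \<and>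
     inj_on (pos T) (Zv T) \<and> pos T ` Zv T = Z \<and> pos T (sink T) = zBS \<and>
     (\<forall>v \<in> V T - {sink T}. succ T v \<in> V T) \<and>
     (\<forall>v \<in> V T. \<exists>m. (succ T ^^ m) v = sink T) \<and>
     (\<forall>v \<in> V T - {sink T}. flow T v > 0) \<and>
     (\<forall>v \<in> Zv T. flow T v - (\<Sum>u \<in> in_nbrs T v. flow T u) = 1) \<and>
     (\<forall>v \<in> Sv T. flow T v = (\<Sum>u \<in> in_nbrs T v. flow T u)) \<and>
     (\<Sum>u \<in> in_nbrs T (sink T). flow T u) = real (card Z)"

definition cost :: "fqst \<Rightarrow> real" where
  "cost T = (\<Sum>v \<in> V T - {sink T}. flow T v * (norm (pos T v - pos T (succ T v)))\<^sup>2)"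

definition degree :: "fqst \<Rightarrow> nat \<Rightarrow> nat" where
  "degree T v = card (in_nbrs T v) + (if v = sink T then 0 else 1)"

definition degenerate :: "fqst \<Rightarrow> bool" where
  "degenerate T \<longleftrightarrow> (\<exists>v \<in> V T - {sink T}. pos T v = pos T (succ T v))"

definition adjacent :: "fqst \<Rightarrow> nat \<Rightarrow> nat \<Rightarrow> bool" where
  "adjacent T a w \<longleftrightarrow> a \<in> V T \<and> w \<in> V T \<and>
     ((a \<noteq> sink T \<and> succ T a = w) \<or> (w \<noteq> sink T \<and> succ T w = a))"

definition overlapping_at :: "fqst \<Rightarrow> nat \<Rightarrow> bool" where
  "overlapping_at T w \<longleftrightarrow> (\<exists>a b. a \<noteq> b \<and> adjacent T a w \<and> adjacent T b w \<and>
      closed_segment (pos T w) (pos T a) \<subseteq> closed_segment (pos T w) (pos T b))"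

datatype strategy = DegreeBound nat | ExplicitBound nat | NodeWeighted real

definition valid_strategy :: "strategy \<Rightarrow> bool" where
  "valid_strategy s = (case s of DegreeBound \<phi> \<Rightarrow> \<phi> \<ge> 3 | ExplicitBound k \<Rightarrow> True
                        | NodeWeighted c \<Rightarrow> c > 0)"

definition feasible :: "strategy \<Rightarrow> fqst \<Rightarrow> bool" where
  "feasible s T = (case s of DegreeBound \<phi> \<Rightarrow> (\<forall>x \<in> Sv T. degree T x \<ge> \<phi>)
                    | ExplicitBound k \<Rightarrow> card (Sv T) \<le> k
                    | NodeWeighted c \<Rightarrow> True)"

definition strategy_cost :: "strategy \<Rightarrow> fqst \<Rightarrow> real" where
  "strategy_cost s T = (case s of NodeWeighted c \<Rightarrow> cost T + c * real (card (Sv T))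
                        | _ \<Rightarrow> cost T)"

definition is_MFQST :: "(real^2) set \<Rightarrow> real^2 \<Rightarrow> strategy \<Rightarrow> fqst \<Rightarrow> bool" where
  "is_MFQST Z zBS s T \<longleftrightarrow> is_fqst Z zBS T \<and> feasible s T \<and>
     (\<forall>T'. is_fqst Z zBS T' \<and> feasible s T' \<longrightarrow> strategy_cost s T \<le> strategy_cost s T')"

end

theory Submission
  imports Defs
begin

lemma in_nbrs_iff: "u \<in> in_nbrs T z \<longleftrightarrow> u \<in> V T \<and> u \<noteq> sink T \<and> succ T u = z"
  by (auto simp: in_nbrs_def)

definition tdist :: "fqst \<Rightarrow> nat \<Rightarrow> nat" where
  "tdist T u = (LEAST m. (succ T ^^ m) u = sink T)"

lemma fqst_facts:
  assumes "is_fqst Z zBS T"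
  shows "finite (V T)" "sink T \<in> V T" "Zv T \<subseteq> V T" "Sv T \<subseteq> V T"
    "\<And>u. u \<in> V T \<Longrightarrow> u \<noteq> sink T \<Longrightarrow> succ T u \<in> V T"
    "\<And>u. u \<in> V T \<Longrightarrow> \<exists>m. (succ T ^^ m) u = sink T"
    "\<And>u. u \<in> V T \<Longrightarrow> u \<noteq> sink T \<Longrightarrow> flow T u > 0"
    "\<And>u. u \<in> V T \<Longrightarrow> u \<noteq> sink T \<Longrightarrow> u \<in> Zv T \<or> u \<in> Sv T"
    "Zv T \<inter> Sv T = {}" "sink T \<notin> Zv T" "sink T \<notin> Sv T"
    "finite (in_nbrs T z)" "in_nbrs T z \<subseteq> V T"
  using assms unfolding is_fqst_def in_nbrs_def by (auto intro: finite_subset)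

lemma tdist_step:
  assumes T: "is_fqst Z zBS T" and u: "u \<in> V T" "u \<noteq> sink T"
  shows "tdist T u = Suc (tdist T (succ T u))"
proof -
  let ?f = "succ T"
  obtain m where m: "(?f ^^ m) u = sink T" using fqst_facts(6)[OF T u(1)] by blast
  have d: "(?f ^^ tdist T u) u = sink T" unfolding tdist_def by (rule LeastI[of _ m], rule m)
  have "tdist T u \<noteq> 0" using d u(2) by (metis funpow_0)
  then obtain k where k: "tdist T u = Suc k" by (cases "tdist T u") auto
  have "(?f ^^ k) (?f u) = sink T" using d k by (simp add: funpow_Suc_right del: funpow.simps)
  hence le1: "tdist T (?f u) \<le> k" unfolding tdist_def by (rule Least_le)
  have "(?f ^^ tdist T (?f u)) (?f u) = sink T"
    unfolding tdist_def by (rule LeastI[of _ k]) fact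
  hence "(?f ^^ Suc (tdist T (?f u))) u = sink T" by (simp add: funpow_Suc_right del: funpow.simps)
  hence "tdist T u \<le> Suc (tdist T (?f u))" unfolding tdist_def by (rule Least_le)
  with le1 k show ?thesis by simp
qed

lemma succ_neq:
  assumes T: "is_fqst Z zBS T" and u: "u \<in> V T" "u \<noteq> sink T"
  shows "succ T u \<noteq> u"
  using tdist_step[OF T u] by auto

lemma reach_measure:
  fixes \<mu> :: "nat \<Rightarrow> nat"
  assumes "\<And>u. u \<in> A \<Longrightarrow> u \<noteq> s \<Longrightarrow> f u \<in> A \<and> \<mu> (f u) < \<mu> u"
  shows "u \<in> A \<Longrightarrow> \<exists>m. (f ^^ m) u = s"
proof (induction "\<mu> u" arbitrary: u rule: less_induct)
  case less
  show ?case
  proof (cases "u = s")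
    case True then show ?thesis by (intro exI[of _ 0]) simp
  next
    case False
    with assms less.prems have "f u \<in> A" "\<mu> (f u) < \<mu> u" by auto
    with less.hyps obtain m where "(f ^^ m) (f u) = s" by blast
    then have "(f ^^ Suc m) u = s" by (simp add: funpow_Suc_right del: funpow.simps)
    then show ?thesis by blast
  qed
qed

definition net :: "fqst \<Rightarrow> nat \<Rightarrow> real" where
  "net T z = (if z = sink T then 0 else flow T z) - (\<Sum>u\<in>in_nbrs T z. flow T u)"

lemma fqst_update:
  assumes T: "is_fqst Z zBS T"
    and E: "V T' = V T" "Zv T' = Zv T" "Sv T' = Sv T" "sink T' = sink T" "pos T' = pos T"
    and S: "\<And>u. u \<in> V T \<Longrightarrow> u \<noteq> sink T \<Longrightarrow> succ T' u \<in> V T"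
    and R: "\<And>u. u \<in> V T \<Longrightarrow> \<exists>m. (succ T' ^^ m) u = sink T"
    and P: "\<And>u. u \<in> V T \<Longrightarrow> u \<noteq> sink T \<Longrightarrow> flow T' u > 0"
    and N: "\<And>z. z \<in> V T \<Longrightarrow> net T' z = net T z"
  shows "is_fqst Z zBS T'"
proof -
  have Z: "\<forall>v \<in> Zv T. flow T v - (\<Sum>u \<in> in_nbrs T v. flow T u) = 1"
   and Sv: "\<forall>v \<in> Sv T. flow T v = (\<Sum>u \<in> in_nbrs T v. flow T u)"
   and Sk: "(\<Sum>u \<in> in_nbrs T (sink T). flow T u) = real (card Z)"
    using T unfolding is_fqst_def by auto
  have Z': "\<forall>v \<in> Zv T'. flow T' v - (\<Sum>u \<in> in_nbrs T' v. flow T' u) = 1"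
  proof
    fix v assume v: "v \<in> Zv T'"
    hence "v \<in> V T" "v \<noteq> sink T" "v \<in> Zv T" using E fqst_facts[OF T] by auto
    with N[of v] Z show "flow T' v - (\<Sum>u \<in> in_nbrs T' v. flow T' u) = 1"
      unfolding net_def E by auto
  qed
  have Sv': "\<forall>v \<in> Sv T'. flow T' v = (\<Sum>u \<in> in_nbrs T' v. flow T' u)"
  proof
    fix v assume v: "v \<in> Sv T'"
    hence "v \<in> V T" "v \<noteq> sink T" "v \<in> Sv T" using E fqst_facts[OF T] by auto
    with N[of v] Sv show "flow T' v = (\<Sum>u \<in> in_nbrs T' v. flow T' u)"
      unfolding net_def E by auto
  qed
  have Sk': "(\<Sum>u \<in> in_nbrs T' (sink T'). flow T' u) = real (card Z)"
    using N[of "sink T"] Sk fqst_facts(2)[OF T] unfolding net_def E by auto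
  have TT: "finite (V T) \<and>
     V T = Zv T \<union> Sv T \<union> {sink T} \<and>
     Zv T \<inter> Sv T = {} \<and> sink T \<notin> Zv T \<and> sink T \<notin> Sv T \<and>
     inj_on (pos T) (Zv T) \<and> pos T ` Zv T = Z \<and> pos T (sink T) = zBS"
    using T unfolding is_fqst_def by blast
  show ?thesis
    unfolding is_fqst_def E
  proof (intro conjI)
    show "\<forall>v\<in>V T - {sink T}. succ T' v \<in> V T" using S by blast
    show "\<forall>v\<in>V T. \<exists>m. (succ T' ^^ m) v = sink T" using R by blast
    show "\<forall>v\<in>V T - {sink T}. 0 < flow T' v" using P by blast
    show "\<forall>v\<in>Zv T. flow T' v - (\<Sum>u \<in> in_nbrs T' v. flow T' u) = 1" using Z' E by simp
    show "\<forall>v\<in>Sv T. flow T' v = (\<Sum>u \<in> in_nbrs T' v. flow T' u)" using Sv' E by simp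
    show "(\<Sum>u \<in> in_nbrs T' (sink T). flow T' u) = real (card Z)" using Sk' E by simp
  qed (use TT in blast)+
qed

lemma sum_upd:
  fixes f :: "'a \<Rightarrow> real"
  assumes "finite A"
  shows "sum (f(y := c)) A = sum f A + (if y \<in> A then c - f y else 0)"
proof (cases "y \<in> A")
  case True
  have 1: "sum (f(y := c)) A = (f(y := c)) y + sum (f(y := c)) (A - {y})"
    by (rule sum.remove[OF assms True])
  have 2: "sum (f(y := c)) (A - {y}) = sum f (A - {y})" by (rule sum.cong) auto
  have 3: "sum f A = f y + sum f (A - {y})" by (rule sum.remove[OF assms True])
  show ?thesis using True unfolding 1 2 3 by simp
next
  case False
  have "sum (f(y := c)) A = sum f A" by (rule sum.cong) (use False in auto)
  then show ?thesis using False by simp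
qed

lemma in_nbrs_reroute:
  assumes "x \<in> V T" "x \<noteq> sink T"
  shows "in_nbrs (T\<lparr>succ := (succ T)(x := y), flow := f'\<rparr>) z
           = (in_nbrs T z - {x}) \<union> (if z = y then {x} else {})"
  using assms by (auto simp: in_nbrs_def)

lemma R1:
  assumes T: "is_fqst Z zBS T" and x: "x \<in> V T" "x \<noteq> sink T"
    and y: "y \<in> V T" "y \<noteq> sink T" "x \<noteq> y" and sxy: "succ T y = succ T x"
  defines "T1 \<equiv> T\<lparr>succ := (succ T)(x := y), flow := (flow T)(y := flow T y + flow T x)\<rparr>"
  shows "is_fqst Z zBS T1"
    and "cost T1 = cost T + flow T x * ((norm (pos T x - pos T y))\<^sup>2
            - (norm (pos T x - pos T (succ T x)))\<^sup>2 + (norm (pos T y - pos T (succ T x)))\<^sup>2)"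
    and "in_nbrs T1 z = (in_nbrs T z - {x}) \<union> (if z = y then {x} else {})"
proof -
  let ?v = "succ T x"
  let ?f = "flow T"
  let ?f' = "(flow T)(y := flow T y + flow T x)"
  have F: "finite (V T)" "sink T \<in> V T" using fqst_facts[OF T] by auto
  have v: "?v \<in> V T" using fqst_facts(5)[OF T x] .
  have yv: "y \<noteq> ?v" using succ_neq[OF T y(1,2)] sxy by auto
  have IN: "\<And>z. in_nbrs T1 z = (in_nbrs T z - {x}) \<union> (if z = y then {x} else {})"
    unfolding T1_def by (rule in_nbrs_reroute[OF x])
  then show "in_nbrs T1 z = (in_nbrs T z - {x}) \<union> (if z = y then {x} else {})" .
  have xin: "\<And>z. x \<in> in_nbrs T z \<longleftrightarrow> z = ?v" using x by (auto simp: in_nbrs_iff)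
  have yin: "\<And>z. y \<in> in_nbrs T z \<longleftrightarrow> z = ?v" using y sxy by (auto simp: in_nbrs_iff)
  have fin: "\<And>z. finite (in_nbrs T z)" using fqst_facts[OF T] by auto
  show "is_fqst Z zBS T1"
  proof (rule fqst_update[OF T])
    show "V T1 = V T" "Zv T1 = Zv T" "Sv T1 = Sv T" "sink T1 = sink T" "pos T1 = pos T"
      by (simp_all add: T1_def)
    show "\<And>u. u \<in> V T \<Longrightarrow> u \<noteq> sink T \<Longrightarrow> succ T1 u \<in> V T"
      using fqst_facts(5)[OF T] y by (simp add: T1_def)
    show "\<And>u. u \<in> V T \<Longrightarrow> u \<noteq> sink T \<Longrightarrow> flow T1 u > 0"
      using fqst_facts(7)[OF T] x y by (simp add: T1_def add_pos_pos)
    show "\<And>u. u \<in> V T \<Longrightarrow> \<exists>m. (succ T1 ^^ m) u = sink T"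
    proof (rule reach_measure[where \<mu> = "\<lambda>u. 2 * tdist T u + (if u = x then 1 else 0)"])
      fix u assume u: "u \<in> V T" "u \<noteq> sink T"
      show "succ T1 u \<in> V T \<and> 2 * tdist T (succ T1 u) + (if succ T1 u = x then 1 else 0)
             < 2 * tdist T u + (if u = x then 1 else 0)"
      proof (cases "u = x")
        case True
        have "tdist T y = tdist T x" using tdist_step[OF T y(1,2)] tdist_step[OF T x] sxy by simp
        then show ?thesis using True y by (simp add: T1_def)
      next
        case False
        then show ?thesis using tdist_step[OF T u] fqst_facts(5)[OF T u] by (simp add: T1_def)
      qed
    qed
    show "\<And>z. z \<in> V T \<Longrightarrow> net T1 z = net T z"
    proof -
      fix z assume z: "z \<in> V T"
      have s1: "(\<Sum>u\<in>in_nbrs T1 z. flow T1 u)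
          = (\<Sum>u\<in>in_nbrs T z - {x}. ?f' u) + (if z = y then ?f x else 0)"
      proof -
        have fl: "flow T1 = ?f'" by (simp add: T1_def)
        show ?thesis
        proof (cases "z = y")
          case True
          have "in_nbrs T1 z = insert x (in_nbrs T z - {x})" using IN[of z] True by auto
          moreover have "x \<notin> in_nbrs T z" using xin True yv by auto
          ultimately show ?thesis using fin[of z] True y(3) unfolding fl by simp
        next
          case False
          have "in_nbrs T1 z = in_nbrs T z - {x}" using IN[of z] False by auto
          then show ?thesis using False unfolding fl by simp
        qed
      qed
      have s2: "(\<Sum>u\<in>in_nbrs T z - {x}. ?f' u)
          = (\<Sum>u\<in>in_nbrs T z - {x}. ?f u) + (if z = ?v then ?f x else 0)"
        using sum_upd[of "in_nbrs T z - {x}" ?f y "flow T y + flow T x"] fin[of z] yin y(3)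
        by simp
      have s3: "(\<Sum>u\<in>in_nbrs T z - {x}. ?f u) = (\<Sum>u\<in>in_nbrs T z. ?f u) - (if z = ?v then ?f x else 0)"
        using sum_diff1[OF fin[of z], of ?f x] xin by simp
      show "net T1 z = net T z"
        unfolding net_def using s1 s2 s3 y(2) by (simp add: T1_def)
    qed
  qed
  let ?g = "\<lambda>u. flow T1 u * (norm (pos T1 u - pos T1 (succ T1 u)))\<^sup>2
                - ?f u * (norm (pos T u - pos T (succ T u)))\<^sup>2"
  have "cost T1 - cost T = (\<Sum>u\<in>V T - {sink T}. ?g u)"
    unfolding cost_def by (simp add: T1_def sum_subtractf)
  also have "\<dots> = (\<Sum>u\<in>{x, y}. ?g u)"
    by (rule sum.mono_neutral_right) (use F x y in \<open>auto simp: T1_def\<close>)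
  also have "\<dots> = ?f x * ((norm (pos T x - pos T y))\<^sup>2
            - (norm (pos T x - pos T ?v))\<^sup>2 + (norm (pos T y - pos T ?v))\<^sup>2)"
    proof -
    have gx: "?g x = ?f x * (norm (pos T x - pos T y))\<^sup>2 - ?f x * (norm (pos T x - pos T ?v))\<^sup>2"
      using y(3) by (simp add: T1_def)
    have gy: "?g y = ?f x * (norm (pos T y - pos T ?v))\<^sup>2"
      using y(3) sxy by (simp add: T1_def algebra_simps)
    show ?thesis using y(3) gx gy by (simp add: algebra_simps)
    qed
  finally show "cost T1 = cost T + ?f x * ((norm (pos T x - pos T y))\<^sup>2
            - (norm (pos T x - pos T ?v))\<^sup>2 + (norm (pos T y - pos T ?v))\<^sup>2)" by simp
qed

lemma R2:
  assumes T: "is_fqst Z zBS T" and x: "x \<in> V T" "x \<noteq> sink T"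
    and vs: "succ T x \<noteq> sink T" and fl: "flow T (succ T x) > flow T x"
  defines "T2 \<equiv> T\<lparr>succ := (succ T)(x := succ T (succ T x)),
                    flow := (flow T)(succ T x := flow T (succ T x) - flow T x)\<rparr>"
  shows "is_fqst Z zBS T2"
    and "cost T2 = cost T + flow T x * ((norm (pos T x - pos T (succ T (succ T x))))\<^sup>2
            - (norm (pos T x - pos T (succ T x)))\<^sup>2 - (norm (pos T (succ T x) - pos T (succ T (succ T x))))\<^sup>2)"
    and "in_nbrs T2 z = (in_nbrs T z - {x}) \<union> (if z = succ T (succ T x) then {x} else {})"
proof -
  let ?v = "succ T x"
  let ?w = "succ T ?v"
  let ?f = "flow T"
  let ?f' = "(flow T)(?v := flow T ?v - flow T x)"
  have F: "finite (V T)" "sink T \<in> V T" using fqst_facts[OF T] by auto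
  have v: "?v \<in> V T" using fqst_facts(5)[OF T x] .
  have w: "?w \<in> V T" using fqst_facts(5)[OF T v vs] .
  have td: "tdist T x = Suc (Suc (tdist T ?w))" using tdist_step[OF T x] tdist_step[OF T v vs] by simp
  have tdv: "tdist T ?v = Suc (tdist T ?w)" using tdist_step[OF T v vs] .
  have wv: "?w \<noteq> ?v" using succ_neq[OF T v vs] .
  have xv: "x \<noteq> ?v" using succ_neq[OF T x] by auto
  have xw: "x \<noteq> ?w" using td by auto
  have IN: "\<And>z. in_nbrs T2 z = (in_nbrs T z - {x}) \<union> (if z = ?w then {x} else {})"
    unfolding T2_def by (rule in_nbrs_reroute[OF x])
  then show "in_nbrs T2 z = (in_nbrs T z - {x}) \<union> (if z = ?w then {x} else {})" .
  have xin: "\<And>z. x \<in> in_nbrs T z \<longleftrightarrow> z = ?v" using x by (auto simp: in_nbrs_iff)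
  have vin: "\<And>z. ?v \<in> in_nbrs T z \<longleftrightarrow> z = ?w" using v vs by (auto simp: in_nbrs_iff)
  have fin: "\<And>z. finite (in_nbrs T z)" using fqst_facts[OF T] by auto
  have flT2: "flow T2 = ?f'" by (simp add: T2_def)
  show "is_fqst Z zBS T2"
  proof (rule fqst_update[OF T])
    show "V T2 = V T" "Zv T2 = Zv T" "Sv T2 = Sv T" "sink T2 = sink T" "pos T2 = pos T"
      by (simp_all add: T2_def)
    show "\<And>u. u \<in> V T \<Longrightarrow> u \<noteq> sink T \<Longrightarrow> succ T2 u \<in> V T"
      using fqst_facts(5)[OF T] w by (simp add: T2_def)
    show "\<And>u. u \<in> V T \<Longrightarrow> u \<noteq> sink T \<Longrightarrow> flow T2 u > 0"
      using fqst_facts(7)[OF T] fl by (simp add: T2_def)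
    show "\<And>u. u \<in> V T \<Longrightarrow> \<exists>m. (succ T2 ^^ m) u = sink T"
    proof (rule reach_measure[where \<mu> = "tdist T"])
      fix u assume u: "u \<in> V T" "u \<noteq> sink T"
      show "succ T2 u \<in> V T \<and> tdist T (succ T2 u) < tdist T u"
      proof (cases "u = x")
        case True
        then show ?thesis using w td by (simp add: T2_def)
      next
        case False
        then show ?thesis using tdist_step[OF T u] fqst_facts(5)[OF T u] by (simp add: T2_def)
      qed
    qed
    show "\<And>z. z \<in> V T \<Longrightarrow> net T2 z = net T z"
    proof -
      fix z assume z: "z \<in> V T"
      have s1: "(\<Sum>u\<in>in_nbrs T2 z. flow T2 u)
          = (\<Sum>u\<in>in_nbrs T z - {x}. ?f' u) + (if z = ?w then ?f x else 0)"
      proof (cases "z = ?w")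
        case True
        have "in_nbrs T2 z = insert x (in_nbrs T z - {x})" using IN[of z] True by auto
        moreover have "x \<notin> in_nbrs T z" using xin True wv by auto
        ultimately show ?thesis using fin[of z] True xv unfolding flT2 by simp
      next
        case False
        have "in_nbrs T2 z = in_nbrs T z - {x}" using IN[of z] False by auto
        then show ?thesis using False unfolding flT2 by simp
      qed
      have s2: "(\<Sum>u\<in>in_nbrs T z - {x}. ?f' u)
          = (\<Sum>u\<in>in_nbrs T z - {x}. ?f u) - (if z = ?w then ?f x else 0)"
        using sum_upd[of "in_nbrs T z - {x}" ?f ?v "flow T ?v - flow T x"] fin[of z] vin xv
        by simp
      have s3: "(\<Sum>u\<in>in_nbrs T z - {x}. ?f u) = (\<Sum>u\<in>in_nbrs T z. ?f u) - (if z = ?v then ?f x else 0)"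
        using sum_diff1[OF fin[of z], of ?f x] xin by simp
      show "net T2 z = net T z"
        unfolding net_def using s1 s2 s3 vs by (simp add: T2_def)
    qed
  qed
  let ?g = "\<lambda>u. flow T2 u * (norm (pos T2 u - pos T2 (succ T2 u)))\<^sup>2
                - ?f u * (norm (pos T u - pos T (succ T u)))\<^sup>2"
  have "cost T2 - cost T = (\<Sum>u\<in>V T - {sink T}. ?g u)"
    unfolding cost_def by (simp add: T2_def sum_subtractf)
  also have "\<dots> = (\<Sum>u\<in>{x, ?v}. ?g u)"
    by (rule sum.mono_neutral_right) (use F x v vs in \<open>auto simp: T2_def\<close>)
  also have "\<dots> = ?f x * ((norm (pos T x - pos T ?w))\<^sup>2
            - (norm (pos T x - pos T ?v))\<^sup>2 - (norm (pos T ?v - pos T ?w))\<^sup>2)"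
  proof -
    have gx: "?g x = ?f x * (norm (pos T x - pos T ?w))\<^sup>2 - ?f x * (norm (pos T x - pos T ?v))\<^sup>2"
      using xv by (simp add: T2_def)
    have gv: "?g ?v = - ?f x * (norm (pos T ?v - pos T ?w))\<^sup>2"
      using xv by (simp add: T2_def algebra_simps)
    show ?thesis using xv gx gv by (simp add: algebra_simps)
  qed
  finally show "cost T2 = cost T + ?f x * ((norm (pos T x - pos T ?w))\<^sup>2
            - (norm (pos T x - pos T ?v))\<^sup>2 - (norm (pos T ?v - pos T ?w))\<^sup>2)" by simp
qed

lemma strat_cost: "Sv T' = Sv T \<Longrightarrow> strategy_cost s T' = strategy_cost s T + (cost T' - cost T)"
  by (cases s) (auto simp: strategy_cost_def)

lemma no_better:
  assumes "is_MFQST Z zBS s T" "is_fqst Z zBS T'" "feasible s T'" "Sv T' = Sv T" "cost T' < cost T"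
  shows False
proof -
  have "strategy_cost s T \<le> strategy_cost s T'" using assms(1-3) unfolding is_MFQST_def by blast
  then show False using strat_cost[OF assms(4), of s] assms(5) by simp
qed

lemma feas_reroute:
  assumes T: "is_fqst Z zBS T" and fs: "feasible s T"
    and E: "Sv T' = Sv T" "sink T' = sink T"
    and x: "x \<in> V T" "x \<noteq> sink T" and y: "y \<noteq> succ T x"
    and IN: "\<And>z. in_nbrs T' z = (in_nbrs T z - {x}) \<union> (if z = y then {x} else {})"
    and hyp: "\<forall>\<phi>. s = DegreeBound \<phi> \<longrightarrow> \<not> (succ T x \<in> Sv T \<and> degree T (succ T x) = \<phi>)"
  shows "feasible s T'"
proof (cases s)
  case (DegreeBound \<phi>)
  let ?v = "succ T x"
  have fin: "\<And>z. finite (in_nbrs T' z)" using IN fqst_facts(12)[OF T] by simp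
  have xin: "\<And>z. x \<in> in_nbrs T z \<longleftrightarrow> z = ?v" using x by (auto simp: in_nbrs_iff)
  have "degree T' z \<ge> \<phi>" if z: "z \<in> Sv T" for z
  proof -
    have d: "degree T z \<ge> \<phi>" using fs z DegreeBound by (simp add: feasible_def)
    have zs: "z \<noteq> sink T" using z fqst_facts(11)[OF T] by auto
    show ?thesis
    proof (cases "z = ?v")
      case True
      have "in_nbrs T' z = in_nbrs T z - {x}" using IN[of z] True y by simp
      moreover have "x \<in> in_nbrs T z" using xin True by simp
      ultimately have "card (in_nbrs T' z) = card (in_nbrs T z) - 1"
        by (simp add: card_Diff_singleton)
      moreover have "degree T z \<noteq> \<phi>" using hyp DegreeBound True z by auto
      ultimately show ?thesis using d zs E unfolding degree_def by auto
    next
      case False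
      have "in_nbrs T z \<subseteq> in_nbrs T' z" using IN[of z] xin False by auto
      then have "card (in_nbrs T z) \<le> card (in_nbrs T' z)" using fin by (rule card_mono[rotated])
      then show ?thesis using d zs E unfolding degree_def by auto
    qed
  qed
  then show ?thesis using DegreeBound E by (simp add: feasible_def)
qed (use fs E in \<open>auto simp: feasible_def\<close>)

lemma norm_add_sq: "(norm (a + e))\<^sup>2 = (norm a)\<^sup>2 + 2 * inner a e + (norm (e::real^2))\<^sup>2"
  by (simp add: power2_norm_eq_inner inner_add_left inner_add_right inner_commute)

lemma quad_sum:
  fixes a :: "nat \<Rightarrow> real^2"
  shows "(\<Sum>u\<in>A. f u * (norm (a u + e))\<^sup>2 - f u * (norm (a u))\<^sup>2)
     = 2 * inner (\<Sum>u\<in>A. f u *\<^sub>R a u) e + (\<Sum>u\<in>A. f u) * (norm e)\<^sup>2"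
proof -
  have "(\<Sum>u\<in>A. f u * (norm (a u + e))\<^sup>2 - f u * (norm (a u))\<^sup>2)
       = (\<Sum>u\<in>A. 2 * (f u * inner (a u) e) + f u * (norm e)\<^sup>2)"
    by (rule sum.cong) (auto simp: norm_add_sq algebra_simps inner_commute)
  also have "\<dots> = 2 * inner (\<Sum>u\<in>A. f u *\<^sub>R a u) e + (\<Sum>u\<in>A. f u) * (norm e)\<^sup>2"
    by (simp add: sum.distrib sum_distrib_left sum_distrib_right inner_sum_left)
  finally show ?thesis .
qed

definition gv :: "fqst \<Rightarrow> nat \<Rightarrow> nat \<Rightarrow> real^2" where
  "gv T w u = (if u = w then pos T w - pos T (succ T w) else pos T w - pos T u)"

lemma move:
  fixes q :: "real^2"
  assumes T: "is_fqst Z zBS T" and w: "w \<in> Sv T"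
  defines "T' \<equiv> T\<lparr>pos := (pos T)(w := q)\<rparr>"
  shows "is_fqst Z zBS T'" "feasible s T' = feasible s T" "Sv T' = Sv T"
   "cost T' = cost T + (\<Sum>u\<in>insert w (in_nbrs T w).
        flow T u * (norm (gv T w u + (q - pos T w)))\<^sup>2 - flow T u * (norm (gv T w u))\<^sup>2)"
proof -
  have INe: "\<And>z. in_nbrs T' z = in_nbrs T z" by (simp add: T'_def in_nbrs_def)
  have degE: "\<And>z. degree T' z = degree T z" by (simp add: degree_def INe) (simp add: T'_def)
  have wV: "w \<in> V T" and ws: "w \<noteq> sink T" and wZ: "w \<notin> Zv T"
    using fqst_facts[OF T] w by auto
  show "Sv T' = Sv T" by (simp add: T'_def)
  show "feasible s T' = feasible s T"
    by (cases s) (simp_all add: feasible_def degE, simp_all add: T'_def)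
  have img: "(pos T)(w := q) ` Zv T = pos T ` Zv T" using wZ by (auto intro!: image_cong)
  have inj: "inj_on ((pos T)(w := q)) (Zv T) = inj_on (pos T) (Zv T)"
    using wZ by (intro inj_on_cong) auto
  have eqs: "V T' = V T" "Zv T' = Zv T" "Sv T' = Sv T" "sink T' = sink T" "succ T' = succ T"
    "flow T' = flow T" "pos T' ` Zv T = pos T ` Zv T" "inj_on (pos T') (Zv T) = inj_on (pos T) (Zv T)"
    "pos T' (sink T) = pos T (sink T)"
    using img inj ws by (simp_all add: T'_def)
  show "is_fqst Z zBS T'"
    using T unfolding is_fqst_def INe eqs by blast
  let ?f = "flow T"
  let ?h = "\<lambda>u. ?f u * (norm (pos T' u - pos T' (succ T u)))\<^sup>2 - ?f u * (norm (pos T u - pos T (succ T u)))\<^sup>2"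
  have sw: "succ T w \<noteq> w" using succ_neq[OF T wV ws] .
  have sub: "insert w (in_nbrs T w) \<subseteq> V T - {sink T}" using wV ws by (auto simp: in_nbrs_iff)
  have "cost T' - cost T = (\<Sum>u\<in>V T - {sink T}. ?h u)"
    unfolding cost_def by (simp add: T'_def sum_subtractf)
  also have "\<dots> = (\<Sum>u\<in>insert w (in_nbrs T w). ?h u)"
    by (rule sum.mono_neutral_right) (use fqst_facts(1)[OF T] sub in \<open>auto simp: T'_def in_nbrs_iff\<close>)
  also have "\<dots> = (\<Sum>u\<in>insert w (in_nbrs T w).
        ?f u * (norm (gv T w u + (q - pos T w)))\<^sup>2 - ?f u * (norm (gv T w u))\<^sup>2)"
  proof (rule sum.cong)
    fix u assume u: "u \<in> insert w (in_nbrs T w)"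
    show "?h u = ?f u * (norm (gv T w u + (q - pos T w)))\<^sup>2 - ?f u * (norm (gv T w u))\<^sup>2"
    proof (cases "u = w")
      case True then show ?thesis using sw by (simp add: T'_def gv_def)
    next
      case False
      then have su: "succ T u = w" using u by (auto simp: in_nbrs_iff)
      have "gv T w u + (q - pos T w) = q - pos T u" using False by (simp add: gv_def)
      then show ?thesis using False su
        by (simp add: T'_def gv_def norm_minus_commute)
    qed
  qed simp
  finally show "cost T' = cost T + (\<Sum>u\<in>insert w (in_nbrs T w).
        ?f u * (norm (gv T w u + (q - pos T w)))\<^sup>2 - ?f u * (norm (gv T w u))\<^sup>2)" by simp
qed

lemma gradient:
  assumes M: "is_MFQST Z zBS s T" and w: "w \<in> Sv T"
  shows "(\<Sum>u\<in>insert w (in_nbrs T w). flow T u *\<^sub>R gv T w u) = 0"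
proof (rule ccontr)
  assume G0: "(\<Sum>u\<in>insert w (in_nbrs T w). flow T u *\<^sub>R gv T w u) \<noteq> 0"
  define G where "G = (\<Sum>u\<in>insert w (in_nbrs T w). flow T u *\<^sub>R gv T w u)"
  define W where "W = (\<Sum>u\<in>insert w (in_nbrs T w). flow T u)"
  have T: "is_fqst Z zBS T" and fs: "feasible s T" using M unfolding is_MFQST_def by auto
  have wV: "w \<in> V T" and ws: "w \<noteq> sink T" using fqst_facts[OF T] w by auto
  have fin: "finite (insert w (in_nbrs T w))" using fqst_facts(12)[OF T] by simp
  have pos: "\<And>u. u \<in> insert w (in_nbrs T w) \<Longrightarrow> flow T u > 0"
    using fqst_facts(7)[OF T] wV ws by (auto simp: in_nbrs_iff)
  have Wpos: "W > 0" unfolding W_def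
    by (rule sum_pos2[OF fin, of w]) (use pos in \<open>auto intro: less_imp_le\<close>)
  define e where "e = - (1 / W) *\<^sub>R G"
  define q where "q = pos T w + e"
  define T' where "T' = T\<lparr>pos := (pos T)(w := q)\<rparr>"
  have m: "is_fqst Z zBS T'" "feasible s T' = feasible s T" "Sv T' = Sv T"
   "cost T' = cost T + (\<Sum>u\<in>insert w (in_nbrs T w).
        flow T u * (norm (gv T w u + (q - pos T w)))\<^sup>2 - flow T u * (norm (gv T w u))\<^sup>2)"
    unfolding T'_def by (rule move[OF T w])+
  have "cost T' = cost T + (2 * inner G e + W * (norm e)\<^sup>2)"
    using m(4) quad_sum[of "\<lambda>u. flow T u" "gv T w" e "insert w (in_nbrs T w)"]
    unfolding G_def W_def q_def by simp
  also have "2 * inner G e + W * (norm e)\<^sup>2 = - (norm G)\<^sup>2 / W"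
  proof -
    have i1: "inner G e = - (1/W) * (norm G)\<^sup>2" unfolding e_def
      by (simp add: power2_norm_eq_inner)
    have i2: "(norm e)\<^sup>2 = (1/W)\<^sup>2 * (norm G)\<^sup>2" unfolding e_def
      using Wpos by (simp add: power_divide)
    show ?thesis unfolding i1 i2 using Wpos by (simp add: field_simps power2_eq_square)
  qed
  finally have "cost T' < cost T" using G0 Wpos unfolding G_def by simp
  then show False using no_better[OF M m(1)] m(2,3) fs by blast
qed

lemma seg_param:
  fixes a v b :: "real^2"
  assumes "a \<in> closed_segment v b"
  obtains t where "0 \<le> t" "t \<le> 1" "a - v = t *\<^sub>R (b - v)" "b - a = (1 - t) *\<^sub>R (b - v)"
proof -
  obtain t where t: "0 \<le> t" "t \<le> 1" "a = (1 - t) *\<^sub>R v + t *\<^sub>R b"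
    using assms unfolding closed_segment_def by blast
  have "a - v = t *\<^sub>R (b - v)" "b - a = (1 - t) *\<^sub>R (b - v)" using t(3)
    by (simp_all add: algebra_simps)
  then show ?thesis using that t by blast
qed

lemma geomA:
  fixes a v b :: "real^2"
  assumes "a \<in> closed_segment v b" "a \<noteq> v" "a \<noteq> b"
  shows "(norm (b - a))\<^sup>2 - (norm (b - v))\<^sup>2 + (norm (a - v))\<^sup>2 < 0"
proof -
  obtain t where t: "0 \<le> t" "t \<le> 1" "a - v = t *\<^sub>R (b - v)" "b - a = (1 - t) *\<^sub>R (b - v)"
    using seg_param[OF assms(1)] by blast
  have t0: "t \<noteq> 0" using t(3) assms(2) by auto
  have t1: "t \<noteq> 1" using t(4) assms(3) by auto
  have L: "norm (b - v) > 0" using t(3) assms(2) by auto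
  have "(norm (b - a))\<^sup>2 - (norm (b - v))\<^sup>2 + (norm (a - v))\<^sup>2
      = (norm (b - v))\<^sup>2 * (2 * t * (t - 1))"
  proof -
    have n1: "norm (b - a) = (1 - t) * norm (b - v)" using t(4) t(2) by simp
    have n2: "norm (a - v) = t * norm (b - v)" using t(3) t(1) by simp
    show ?thesis unfolding n1 n2 by (simp add: power2_eq_square algebra_simps)
  qed
  also have "\<dots> < 0"
    using L t t0 t1 by (intro mult_pos_neg) (auto intro!: mult_pos_neg)
  finally show ?thesis .
qed

lemma geomSkip:
  fixes X V W :: "real^2"
  assumes "(W \<in> closed_segment V X \<and> W \<noteq> V) \<or> (X \<in> closed_segment V W \<and> X \<noteq> V)"
  shows "(norm (X - W))\<^sup>2 - (norm (X - V))\<^sup>2 - (norm (V - W))\<^sup>2 < 0"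
    and "(V - W) + (V - X) \<noteq> 0"
proof -
  have "(norm (X - W))\<^sup>2 - (norm (X - V))\<^sup>2 - (norm (V - W))\<^sup>2 < 0 \<and> (V - W) + (V - X) \<noteq> 0"
  proof (cases "W \<in> closed_segment V X \<and> W \<noteq> V")
    case True
    obtain t where t: "0 \<le> t" "t \<le> 1" "W - V = t *\<^sub>R (X - V)" "X - W = (1 - t) *\<^sub>R (X - V)"
      using seg_param True by blast
    have t0: "t \<noteq> 0" using t(3) True by auto
    have L: "norm (X - V) > 0" using t(3) True by auto
    have e1: "V - W = - (t *\<^sub>R (X - V))" using t(3) by (simp add: algebra_simps)
    have "(norm (X - W))\<^sup>2 - (norm (X - V))\<^sup>2 - (norm (V - W))\<^sup>2 = (norm (X - V))\<^sup>2 * (- 2 * t)"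
    proof -
      have n1: "norm (X - W) = (1 - t) * norm (X - V)" using t(4) t(2) by simp
      have n2: "norm (V - W) = t * norm (X - V)" unfolding e1 norm_minus_cancel using t(1) by simp
      show ?thesis unfolding n1 n2 by (simp add: power2_eq_square algebra_simps)
    qed
    also have "\<dots> < 0" by (rule mult_pos_neg) (use L t t0 in \<open>simp_all add: order_le_neq_trans\<close>)
    finally have 1: "(norm (X - W))\<^sup>2 - (norm (X - V))\<^sup>2 - (norm (V - W))\<^sup>2 < 0" .
    have 2: "(V - W) + (V - X) \<noteq> 0"
    proof
      assume "(V - W) + (V - X) = 0"
      then have "- (t *\<^sub>R (X - V)) - (X - V) = 0" unfolding e1 by (simp add: algebra_simps)
      then have "(t + 1) *\<^sub>R (X - V) = 0" by (simp add: algebra_simps)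
      then show False using t L by auto
    qed
    show ?thesis using 1 2 by blast
  next
    case False
    then have F: "X \<in> closed_segment V W" "X \<noteq> V" using assms by auto
    obtain t where t: "0 \<le> t" "t \<le> 1" "X - V = t *\<^sub>R (W - V)" "W - X = (1 - t) *\<^sub>R (W - V)"
      using seg_param F by blast
    have t0: "t \<noteq> 0" using t(3) F by auto
    have L: "norm (W - V) > 0" using t(3) F by auto
    have e1: "X - W = - ((1 - t) *\<^sub>R (W - V))" using t(4) by (simp add: algebra_simps)
    have e2: "V - W = - (W - V)" by simp
    have "(norm (X - W))\<^sup>2 - (norm (X - V))\<^sup>2 - (norm (V - W))\<^sup>2 = (norm (W - V))\<^sup>2 * (- 2 * t)"
    proof -
      have n1: "norm (X - W) = (1 - t) * norm (W - V)" unfolding e1 norm_minus_cancel using t(2) by simp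
      have n2: "norm (X - V) = t * norm (W - V)" using t(3) t(1) by simp
      have n3: "norm (V - W) = norm (W - V)" by (rule norm_minus_commute)
      show ?thesis unfolding n1 n2 n3 by (simp add: power2_eq_square algebra_simps)
    qed
    also have "\<dots> < 0" by (rule mult_pos_neg) (use L t t0 in \<open>simp_all add: order_le_neq_trans\<close>)
    finally have 1: "(norm (X - W))\<^sup>2 - (norm (X - V))\<^sup>2 - (norm (V - W))\<^sup>2 < 0" .
    have 2: "(V - W) + (V - X) \<noteq> 0"
    proof
      assume "(V - W) + (V - X) = 0"
      then have "(W - V) + (X - V) = 0" by (simp add: algebra_simps)
      then have "(1 + t) *\<^sub>R (W - V) = 0" unfolding t(3) by (simp add: algebra_simps)
      then show False using t L by auto
    qed
    show ?thesis using 1 2 by blast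
  qed
  then show "(norm (X - W))\<^sup>2 - (norm (X - V))\<^sup>2 - (norm (V - W))\<^sup>2 < 0"
    and "(V - W) + (V - X) \<noteq> 0" by auto
qed

lemma flows_in_V:
  assumes T: "is_fqst Z zBS T" and v: "v \<in> V T" "v \<noteq> sink T" and x: "x \<in> in_nbrs T v"
  shows "flow T x \<le> (\<Sum>u\<in>in_nbrs T v. flow T u)"
    and "v \<in> Zv T \<Longrightarrow> flow T v = 1 + (\<Sum>u\<in>in_nbrs T v. flow T u)"
    and "v \<in> Sv T \<Longrightarrow> flow T v = (\<Sum>u\<in>in_nbrs T v. flow T u)"
proof -
  show "flow T x \<le> (\<Sum>u\<in>in_nbrs T v. flow T u)"
    by (rule member_le_sum[OF x]) (use fqst_facts(7)[OF T] in \<open>auto simp: in_nbrs_iff less_imp_le\<close>,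
        rule fqst_facts(12)[OF T])
  show "v \<in> Zv T \<Longrightarrow> flow T v = 1 + (\<Sum>u\<in>in_nbrs T v. flow T u)"
    using T unfolding is_fqst_def by auto
  show "v \<in> Sv T \<Longrightarrow> flow T v = (\<Sum>u\<in>in_nbrs T v. flow T u)"
    using T unfolding is_fqst_def by auto
qed

lemma skip_case:
  assumes M: "is_MFQST Z zBS s T"
    and hyp: "\<forall>\<phi>. s = DegreeBound \<phi> \<longrightarrow> \<not> (succ T x \<in> Sv T \<and> degree T (succ T x) = \<phi>)"
    and x: "x \<in> V T" "x \<noteq> sink T" and vs: "succ T x \<noteq> sink T"
    and geo: "(pos T (succ T (succ T x)) \<in> closed_segment (pos T (succ T x)) (pos T x)
                 \<and> pos T (succ T (succ T x)) \<noteq> pos T (succ T x))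
              \<or> (pos T x \<in> closed_segment (pos T (succ T x)) (pos T (succ T (succ T x)))
                 \<and> pos T x \<noteq> pos T (succ T x))"
  shows False
proof -
  let ?v = "succ T x" let ?w = "succ T ?v"
  have T: "is_fqst Z zBS T" and fs: "feasible s T" using M unfolding is_MFQST_def by auto
  have v: "?v \<in> V T" using fqst_facts(5)[OF T x] .
  have G: "(norm (pos T x - pos T ?w))\<^sup>2 - (norm (pos T x - pos T ?v))\<^sup>2 - (norm (pos T ?v - pos T ?w))\<^sup>2 < 0"
      "(pos T ?v - pos T ?w) + (pos T ?v - pos T x) \<noteq> 0"
    using geomSkip[OF geo] by auto
  have xin: "x \<in> in_nbrs T ?v" using x by (simp add: in_nbrs_iff)
  show False
  proof (cases "flow T ?v > flow T x")
    case True
    define T2 where "T2 = T\<lparr>succ := (succ T)(x := ?w),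
                    flow := (flow T)(?v := flow T ?v - flow T x)\<rparr>"
    have R: "is_fqst Z zBS T2"
      "cost T2 = cost T + flow T x * ((norm (pos T x - pos T ?w))\<^sup>2
            - (norm (pos T x - pos T ?v))\<^sup>2 - (norm (pos T ?v - pos T ?w))\<^sup>2)"
      "\<And>z. in_nbrs T2 z = (in_nbrs T z - {x}) \<union> (if z = ?w then {x} else {})"
      unfolding T2_def using R2[OF T x vs True] by auto
    have E: "Sv T2 = Sv T" "sink T2 = sink T" by (simp_all add: T2_def)
    have wv: "?w \<noteq> ?v" using succ_neq[OF T v vs] .
    have "feasible s T2" by (rule feas_reroute[OF T fs E x wv R(3) hyp])
    moreover have "cost T2 < cost T"
      using R(2) G(1) fqst_facts(7)[OF T x] by (simp add: mult_pos_neg)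
    ultimately show False using no_better[OF M R(1)] E by blast
  next
    case False
    have le: "flow T x \<le> (\<Sum>u\<in>in_nbrs T ?v. flow T u)" by (rule flows_in_V(1)[OF T v vs xin])
    have vS: "?v \<in> Sv T"
    proof -
      have "?v \<in> Zv T \<or> ?v \<in> Sv T" using fqst_facts(8)[OF T v vs] .
      moreover have "?v \<notin> Zv T" using flows_in_V(2)[OF T v vs xin] le False by auto
      ultimately show ?thesis by blast
    qed
    have fv: "flow T ?v = (\<Sum>u\<in>in_nbrs T ?v. flow T u)" by (rule flows_in_V(3)[OF T v vs xin vS])
    have fin: "finite (in_nbrs T ?v)" by (rule fqst_facts(12)[OF T])
    have eqx: "flow T ?v = flow T x" using False le fv by simp
    have rest: "(\<Sum>u\<in>in_nbrs T ?v - {x}. flow T u) = 0"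
      using sum_diff1[OF fin, of "flow T" x] xin fv eqx by simp
    have single: "in_nbrs T ?v = {x}"
    proof (rule ccontr)
      assume "in_nbrs T ?v \<noteq> {x}"
      then have ne: "in_nbrs T ?v - {x} \<noteq> {}" using xin by auto
      have "(\<Sum>u\<in>in_nbrs T ?v - {x}. flow T u) > 0"
        by (rule sum_pos) (use fin ne fqst_facts(7)[OF T] in \<open>auto simp: in_nbrs_iff\<close>)
      then show False using rest by simp
    qed
    have gr: "(\<Sum>u\<in>insert ?v (in_nbrs T ?v). flow T u *\<^sub>R gv T ?v u) = 0"
      by (rule gradient[OF M vS])
    have xv: "x \<noteq> ?v" using succ_neq[OF T x] by auto
    have "flow T ?v *\<^sub>R (pos T ?v - pos T ?w) + flow T x *\<^sub>R (pos T ?v - pos T x) = 0"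
      using gr xv unfolding single by (simp add: gv_def)
    then have "flow T x *\<^sub>R ((pos T ?v - pos T ?w) + (pos T ?v - pos T x)) = 0"
      unfolding eqx scaleR_right_distrib .
    then show False using G(2) fqst_facts(7)[OF T x] by simp
  qed
qed

lemma caseA_nondeg:
  assumes M: "is_MFQST Z zBS s T"
    and hyp: "\<forall>\<phi>. s = DegreeBound \<phi> \<longrightarrow> \<not> (succ T x \<in> Sv T \<and> degree T (succ T x) = \<phi>)"
    and x: "x \<in> V T" "x \<noteq> sink T" and y: "y \<in> V T" "y \<noteq> sink T" "x \<noteq> y"
    and sxy: "succ T y = succ T x"
    and geo: "pos T y \<in> closed_segment (pos T (succ T x)) (pos T x)"
      "pos T y \<noteq> pos T (succ T x)" "pos T y \<noteq> pos T x"
  shows False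
proof -
  have T: "is_fqst Z zBS T" and fs: "feasible s T" using M unfolding is_MFQST_def by auto
  define T1 where "T1 = T\<lparr>succ := (succ T)(x := y), flow := (flow T)(y := flow T y + flow T x)\<rparr>"
  have R: "is_fqst Z zBS T1"
    "cost T1 = cost T + flow T x * ((norm (pos T x - pos T y))\<^sup>2
            - (norm (pos T x - pos T (succ T x)))\<^sup>2 + (norm (pos T y - pos T (succ T x)))\<^sup>2)"
    "\<And>z. in_nbrs T1 z = (in_nbrs T z - {x}) \<union> (if z = y then {x} else {})"
    unfolding T1_def using R1[OF T x y sxy] by auto
  have E: "Sv T1 = Sv T" "sink T1 = sink T" by (simp_all add: T1_def)
  have yv: "y \<noteq> succ T x" using succ_neq[OF T y(1,2)] sxy by auto
  have "feasible s T1" by (rule feas_reroute[OF T fs E x yv R(3) hyp])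
  moreover have "cost T1 < cost T"
    using R(2) geomA[OF geo] fqst_facts(7)[OF T x] by (simp add: mult_pos_neg)
  ultimately show False using no_better[OF M R(1)] E by blast
qed

lemma caseA_deg:
  assumes M: "is_MFQST Z zBS s T"
    and hyp: "\<forall>\<phi>. s = DegreeBound \<phi> \<longrightarrow> \<not> (succ T x \<in> Sv T \<and> degree T (succ T x) = \<phi>)"
    and xS: "x \<in> Sv T" and y: "y \<in> V T" "y \<noteq> sink T" "x \<noteq> y"
    and sxy: "succ T y = succ T x"
    and geo: "pos T x = pos T y" "pos T x \<noteq> pos T (succ T x)"
  shows False
proof -
  have T: "is_fqst Z zBS T" and fs: "feasible s T" using M unfolding is_MFQST_def by auto
  have x: "x \<in> V T" "x \<noteq> sink T" using xS fqst_facts[OF T] by auto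
  define T1 where "T1 = T\<lparr>succ := (succ T)(x := y), flow := (flow T)(y := flow T y + flow T x)\<rparr>"
  have R: "is_fqst Z zBS T1"
    "cost T1 = cost T + flow T x * ((norm (pos T x - pos T y))\<^sup>2
            - (norm (pos T x - pos T (succ T x)))\<^sup>2 + (norm (pos T y - pos T (succ T x)))\<^sup>2)"
    "\<And>z. in_nbrs T1 z = (in_nbrs T z - {x}) \<union> (if z = y then {x} else {})"
    unfolding T1_def using R1[OF T x y sxy] by auto
  have E: "Sv T1 = Sv T" "sink T1 = sink T" "pos T1 = pos T" "succ T1 x = y"
    "\<And>u. u \<noteq> y \<Longrightarrow> flow T1 u = flow T u" by (simp_all add: T1_def)
  have yv: "y \<noteq> succ T x" using succ_neq[OF T y(1,2)] sxy by auto
  have f1: "feasible s T1" by (rule feas_reroute[OF T fs E(1,2) x yv R(3) hyp])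
  have c1: "cost T1 = cost T" using R(2) geo(1) by simp
  have M1: "is_MFQST Z zBS s T1"
    unfolding is_MFQST_def
  proof (intro conjI allI impI)
    fix T' assume "is_fqst Z zBS T' \<and> feasible s T'"
    then have "strategy_cost s T \<le> strategy_cost s T'" using M unfolding is_MFQST_def by blast
    then show "strategy_cost s T1 \<le> strategy_cost s T'" using strat_cost[OF E(1), of s] c1 by simp
  qed (rule R(1), rule f1)
  have xnin: "x \<notin> in_nbrs T x" using succ_neq[OF T x] by (auto simp: in_nbrs_iff)
  have ynin: "y \<notin> in_nbrs T x" using sxy succ_neq[OF T x] by (auto simp: in_nbrs_iff)
  have in1: "in_nbrs T1 x = in_nbrs T x" using R(3)[of x] xnin y(3) by auto
  let ?S = "(\<Sum>u\<in>in_nbrs T x. flow T u *\<^sub>R (pos T x - pos T u))"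
  have g0: "(\<Sum>u\<in>insert x (in_nbrs T x). flow T u *\<^sub>R gv T x u) = 0"
    by (rule gradient[OF M xS])
  have fin: "finite (in_nbrs T x)" by (rule fqst_facts(12)[OF T])
  have S0: "(\<Sum>u\<in>in_nbrs T x. flow T u *\<^sub>R gv T x u) = ?S"
    by (rule sum.cong) (auto simp: gv_def in_nbrs_iff)
  have g0': "flow T x *\<^sub>R (pos T x - pos T (succ T x)) + ?S = 0"
    using g0 xnin fin S0 by (simp add: gv_def)
  have g1: "(\<Sum>u\<in>insert x (in_nbrs T1 x). flow T1 u *\<^sub>R gv T1 x u) = 0"
    by (rule gradient[OF M1]) (use xS E in simp)
  have S1: "(\<Sum>u\<in>in_nbrs T x. flow T1 u *\<^sub>R gv T1 x u) = ?S"
  proof (rule sum.cong)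
    fix u assume u: "u \<in> in_nbrs T x"
    then have "u \<noteq> y" "u \<noteq> x" using ynin xnin by auto
    then show "flow T1 u *\<^sub>R gv T1 x u = flow T u *\<^sub>R (pos T x - pos T u)"
      using E(3,5) by (simp add: gv_def)
  qed simp
  have g1': "flow T1 x *\<^sub>R (pos T x - pos T y) + ?S = 0"
    using g1 xnin fin S1 E(3,4) unfolding in1 by (simp add: gv_def)
  then have "?S = 0" using geo(1) by simp
  then have "flow T x *\<^sub>R (pos T x - pos T (succ T x)) = 0" using g0' by simp
  then show False using geo(2) fqst_facts(7)[OF T x] by simp
qed

theorem mainTheorem5:
  fixes Z :: "(real^2) set" and zBS :: "real^2" and s :: strategy and T :: fqst and v :: nat
  assumes "finite Z" and "card Z \<ge> 1" and "zBS \<notin> Z"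
    and "valid_strategy s"
    and "is_fqst Z zBS T" and "\<not> degenerate T" and "feasible s T"
    and "overlapping_at T v"
    and "(\<forall>\<phi>. s = DegreeBound \<phi> \<longrightarrow> \<not> (v \<in> Sv T \<and> degree T v = \<phi>))"
  shows "\<not> is_MFQST Z zBS s T"
proof
  assume M: "is_MFQST Z zBS s T"
  have T: "is_fqst Z zBS T" using assms(5) .
  obtain a b where ab: "a \<noteq> b" "adjacent T a v" "adjacent T b v"
    "closed_segment (pos T v) (pos T a) \<subseteq> closed_segment (pos T v) (pos T b)"
    using assms(8) unfolding overlapping_at_def by blast
  have Pa: "pos T a \<in> closed_segment (pos T v) (pos T b)" using ab(4) ends_in_segment(2) by blast
  have nd: "\<And>u. u \<in> V T \<Longrightarrow> u \<noteq> sink T \<Longrightarrow> pos T u \<noteq> pos T (succ T u)"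
    using assms(6) unfolding degenerate_def by blast
  have V: "a \<in> V T" "b \<in> V T" "v \<in> V T" using ab(2,3) unfolding adjacent_def by auto
  have hyp: "\<And>x. succ T x = v \<Longrightarrow>
      \<forall>\<phi>. s = DegreeBound \<phi> \<longrightarrow> \<not> (succ T x \<in> Sv T \<and> degree T (succ T x) = \<phi>)"
    using assms(9) by simp
  consider (A) "a \<noteq> sink T" "succ T a = v" "b \<noteq> sink T" "succ T b = v"
    | (B) "v \<noteq> sink T" "succ T v = a" "b \<noteq> sink T" "succ T b = v"
    | (C) "a \<noteq> sink T" "succ T a = v" "v \<noteq> sink T" "succ T v = b"
    | (D) "v \<noteq> sink T" "succ T v = a" "succ T v = b"
    using ab(2,3) unfolding adjacent_def by blast
  then show False
  proof cases
    case A
    show False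
    proof (cases "pos T a = pos T b")
      case True
      have "a \<in> Sv T \<or> b \<in> Sv T"
      proof (rule ccontr)
        assume "\<not> (a \<in> Sv T \<or> b \<in> Sv T)"
        then have "a \<in> Zv T" "b \<in> Zv T" using fqst_facts(8)[OF T] V A by blast+
        moreover have "inj_on (pos T) (Zv T)" using T unfolding is_fqst_def by blast
        ultimately show False using True ab(1) by (auto dest: inj_onD)
      qed
      then show False
      proof
        assume aS: "a \<in> Sv T"
        show False
          by (rule caseA_deg[OF M hyp[OF A(2)] aS V(2) A(3) ab(1)])
             (use A True nd[OF V(1) A(1)] in auto)
      next
        assume bS: "b \<in> Sv T"
        show False
          by (rule caseA_deg[OF M hyp[OF A(4)] bS V(1) A(1) ab(1)[symmetric]])
             (use A True nd[OF V(2) A(3)] in auto)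
      qed
    next
      case False
      show False
        by (rule caseA_nondeg[OF M hyp[OF A(4)] V(2) A(3) V(1) A(1) ab(1)[symmetric]])
           (use A False Pa nd[OF V(1) A(1)] in auto)
    qed
  next
    case B
    show False
      by (rule skip_case[OF M hyp[OF B(4)] V(2) B(3)]) (use B Pa nd[OF V(3) B(1)] in auto)
  next
    case C
    show False
      by (rule skip_case[OF M hyp[OF C(2)] V(1) C(1)]) (use C Pa nd[OF V(1) C(1)] in auto)
  next
    case D
    then show False using ab(1) by simp
  qed
qed

end
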